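(* Let $v\in\mathbb{R}^{n\times m}_+$ be nondegenerate and $B\in\mathbb{R}^n_{>0}$. Let $\mathcal{X}=\{x\in\mathbb{R}^{n\times m}_+:\sum_ix_{ij}=1\ \forall j\}$ and $A:\mathbb{R}^{n\times m}\to\mathbb{R}^n$, $Ax=(\langle v_1,x_1\rangle,\dots,\langle v_n,x_n\rangle)$, so $\|A\|=\max_i\|v_i\|_2$. Let $\underline u_i=\frac{B_i\|v_i\|_1}{\|B\|_1}$ and define $\tilde h(u)=\sum_i\tilde h_i(u_i)$ with $\tilde h_i(u_i)=-B_i\log u_i$ for $u_i>\underline u_i$ and $\tilde h_i(u_i)=\frac{B_i}{2\underline u_i^2}(u_i-\underline u_i)^2-\frac{B_i}{\underline u_i}(u_i-\underline u_i)-B_i\log\underline u_i$ for $u_i\le\underline u_i$. Let $\mu=\min_i\frac{B_i}{\|v_i\|_1^2}$, $L=\max_i\frac{B_i}{\underline u_i^2}$, $F(x)=\tilde h(Ax)$ and $F^*=\min_{x\in\mathcal{X}}F$. Then projected gradient $x^{t+1}=\Pi_{\mathcal{X}}(x^t-\frac{1}{L\|A\|^2}\nabla F(x^t))$ started at $x^0\in\mathcal{X}$ satisfies $$F(x^t)-F^*\le\left(1-\frac{\mu}{\max\{\mu,\,LH_{\mathcal{X}}(A)^2\|A\|^2\}}\right)^t(F(x^0)-F^* )\quad\forall t\ge0.$$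
   Context: $v_i$ is the $i$-th row of $v$; nondegenerate means no zero row or column. $x_i$ is the $i$-th row of $x$; $\mathcal{X}$ is viewed as a subset of $\mathbb{R}^{nm}$. $\Pi_{\mathcal{X}}$ is Euclidean projection. Hoffman constant: $H_{\mathcal{X}}(A)$ is the smallest $H>0$ such that for every $z$ with $\mathcal{X}\cap\{x:Ax=z\}\neq\emptyset$, setting $\mathcal{S}=\{x:Ax=z\}$, $\|x-\Pi_{\mathcal{X}\cap\mathcal{S}}(x)\|\le H\|Ax-z\|$ for all $x\in\mathcal{X}$. *)

theory Defs
  imports "HOL-Analysis.Analysis"
begin

text \<open>Matrices in R^{n x m} are elements of real^'m^'n; row i of x is x $ i.
  The Euclidean norm on real^'m^'n is the Frobenius norm, i.e. R^{n x m} viewed as R^{nm}.\<close>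

definition nondegenerate :: "real^'m^'n \<Rightarrow> bool" where
  "nondegenerate v \<longleftrightarrow> (\<forall>i j. v $ i $ j \<ge> 0)
     \<and> (\<forall>i. \<exists>j. v $ i $ j \<noteq> 0) \<and> (\<forall>j. \<exists>i. v $ i $ j \<noteq> 0)"

definition simplexes :: "(real^'m^'n) set" where
  "simplexes = {x. (\<forall>i j. x $ i $ j \<ge> 0) \<and> (\<forall>j. (\<Sum>i\<in>UNIV. x $ i $ j) = 1)}"

definition linA :: "real^'m^'n \<Rightarrow> real^'m^'n \<Rightarrow> real^'n" where
  "linA v x = (\<chi> i. v $ i \<bullet> x $ i)"

definition norm1 :: "real^'k \<Rightarrow> real" where
  "norm1 w = (\<Sum>j\<in>UNIV. \<bar>w $ j\<bar>)"

definition ulow :: "real^'m^'n \<Rightarrow> real^'n \<Rightarrow> 'n \<Rightarrow> real" where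
  "ulow v B i = B $ i * norm1 (v $ i) / norm1 B"

definition htil_i :: "real \<Rightarrow> real \<Rightarrow> real \<Rightarrow> real" where
  "htil_i b ul u = (if u > ul then - b * ln u
     else b / (2 * ul^2) * (u - ul)^2 - b / ul * (u - ul) - b * ln ul)"

definition htil :: "real^'m^'n \<Rightarrow> real^'n \<Rightarrow> real^'n \<Rightarrow> real" where
  "htil v B u = (\<Sum>i\<in>UNIV. htil_i (B $ i) (ulow v B i) (u $ i))"

definition Fobj :: "real^'m^'n \<Rightarrow> real^'n \<Rightarrow> real^'m^'n \<Rightarrow> real" where
  "Fobj v B x = htil v B (linA v x)"

definition muc :: "real^'m^'n \<Rightarrow> real^'n \<Rightarrow> real" where
  "muc v B = Min (range (\<lambda>i. B $ i / (norm1 (v $ i))^2))"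

definition Lc :: "real^'m^'n \<Rightarrow> real^'n \<Rightarrow> real" where
  "Lc v B = Max (range (\<lambda>i. B $ i / (ulow v B i)^2))"

definition grad :: "('a::euclidean_space \<Rightarrow> real) \<Rightarrow> 'a \<Rightarrow> 'a" where
  "grad f x = (SOME g. (f has_derivative (\<lambda>h. g \<bullet> h)) (at x))"

definition hoffman :: "'a::euclidean_space set \<Rightarrow> ('a \<Rightarrow> 'b::euclidean_space) \<Rightarrow> real" where
  "hoffman X A = Inf {H. H > 0 \<and> (\<forall>z. X \<inter> {x. A x = z} \<noteq> {} \<longrightarrow>
      (\<forall>x\<in>X. norm (x - closest_point (X \<inter> {x. A x = z}) x) \<le> H * norm (A x - z)))}"

end

theory Submission
  imports Defs
begin


definition hd :: "real \<Rightarrow> real \<Rightarrow> real \<Rightarrow> real" where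
  "hd b ul u = (if u > ul then - b / u else b / ul^2 * (u - ul) - b / ul)"

lemma deriv_glue:
  fixes f g q :: "real \<Rightarrow> real"
  assumes "DERIV g a :> D" "DERIV q a :> D" "\<And>u. u > a \<Longrightarrow> f u = g u"
    "\<And>u. u \<le> a \<Longrightarrow> f u = q u" "g a = q a"
  shows "DERIV f a :> D"
proof -
  have fa: "f a = q a" "f a = g a" using assms(4,5) by auto
  have l: "((\<lambda>h. (f (a + h) - f a) / h) \<longlongrightarrow> D) (at_left 0)"
  proof -
    have "((\<lambda>h. (q (a + h) - q a) / h) \<longlongrightarrow> D) (at_left 0)"
      using assms(2) unfolding DERIV_def filterlim_at_split by auto
    moreover have "eventually (\<lambda>h. (q (a + h) - q a) / h = (f (a + h) - f a) / h) (at_left 0)"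
      unfolding eventually_at_filter by (rule always_eventually) (auto simp: fa(1) assms(4))
    ultimately show ?thesis by (rule Lim_transform_eventually)
  qed
  have r: "((\<lambda>h. (f (a + h) - f a) / h) \<longlongrightarrow> D) (at_right 0)"
  proof -
    have "((\<lambda>h. (g (a + h) - g a) / h) \<longlongrightarrow> D) (at_right 0)"
      using assms(1) unfolding DERIV_def filterlim_at_split by auto
    moreover have "eventually (\<lambda>h. (g (a + h) - g a) / h = (f (a + h) - f a) / h) (at_right 0)"
      unfolding eventually_at_filter by (rule always_eventually) (auto simp: fa(2) assms(3))
    ultimately show ?thesis by (rule Lim_transform_eventually)
  qed
  show ?thesis unfolding DERIV_def filterlim_at_split using l r by auto
qed

lemma htil_deriv:
  assumes b: "b > 0" and ul: "ul > 0"
  shows "DERIV (htil_i b ul) u :> hd b ul u"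
proof -
  define g where "g = (\<lambda>u::real. - b * ln u)"
  define q where "q = (\<lambda>u::real. b / (2 * ul^2) * (u - ul)^2 - b / ul * (u - ul) - b * ln ul)"
  have dg: "DERIV g u :> - b / u" if "u > 0" for u
    unfolding g_def using that by (auto intro!: derivative_eq_intros simp: field_simps)
  have dq: "DERIV q u :> b / ul^2 * (u - ul) - b / ul" for u
    unfolding q_def using ul by (auto intro!: derivative_eq_intros simp: field_simps power2_eq_square)
  have fg: "htil_i b ul u = g u" if "u > ul" for u using that by (simp add: htil_i_def g_def)
  have fq: "htil_i b ul u = q u" if "u \<le> ul" for u using that by (simp add: htil_i_def q_def)
  consider "u > ul" | "u < ul" | "u = ul" by linarith
  then show ?thesis
  proof cases
    case 1
    have ev: "eventually (\<lambda>x. x \<in> {ul<..}) (nhds u)" using 1 by (intro eventually_nhds_in_open) auto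
    have "DERIV g u :> - b / u" using 1 ul by (intro dg) auto
    moreover have "eventually (\<lambda>x. htil_i b ul x = g x) (nhds u)" using ev by (rule eventually_mono) (auto simp: fg)
    ultimately show ?thesis using 1 by (subst DERIV_cong_ev[OF refl]) (auto simp: hd_def)
  next
    case 2
    have ev: "eventually (\<lambda>x. x \<in> {..<ul}) (nhds u)" using 2 by (intro eventually_nhds_in_open) auto
    have "eventually (\<lambda>x. htil_i b ul x = q x) (nhds u)" using ev by (rule eventually_mono) (auto simp: fq)
    then show ?thesis using 2 dq[of u] by (subst DERIV_cong_ev[OF refl]) (auto simp: hd_def)
  next
    case 3
    have "DERIV (htil_i b ul) ul :> - b / ul"
      by (rule deriv_glue[OF dg[OF ul] _ fg fq]) (use dq[of ul] in \<open>auto simp: g_def q_def\<close>)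
    then show ?thesis using 3 by (simp add: hd_def)
  qed
qed



lemma recip_diff: fixes b s t :: real assumes "0 < t" "t \<le> s" shows "b / t - b / s = b * (s - t) / (s * t)"
  proof -
  have "s > 0" using assms by linarith
  then show ?thesis using assms by (simp add: field_simps)
qed

lemma hd_upper:
  assumes b: "b > 0" and ul: "ul > 0" and ts: "t \<le> s"
  shows "hd b ul s - hd b ul t \<le> b / ul^2 * (s - t)"
proof -
  have key: "b / x - b / y \<le> b / ul^2 * (y - x)" if "ul \<le> x" "x \<le> y" for x y
  proof -
    have "b / x - b / y = b * (y - x) / (y * x)" using that ul by (intro recip_diff) auto
    also have "\<dots> \<le> b * (y - x) / ul^2"
      using that ul b by (intro divide_left_mono mult_mono) (auto simp: power2_eq_square intro!: mult_mono mult_pos_pos)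
    finally show ?thesis by simp
  qed
  consider "ul < t" | "s \<le> ul" | "t \<le> ul" "ul < s" using ts by linarith
  then show ?thesis
  proof cases
    case 1 then show ?thesis using key[of t s] ts by (simp add: hd_def)
  next
    case 2 then show ?thesis using ts by (simp add: hd_def right_diff_distrib)
  next
    case 3
    have "hd b ul s - hd b ul t = (b / ul - b / s) + b / ul^2 * (ul - t)" using 3 ul by (simp add: hd_def field_simps)
    also have "\<dots> \<le> b / ul^2 * (s - ul) + b / ul^2 * (ul - t)" using key[of ul s] 3 by simp
    also have "\<dots> = b / ul^2 * ((s - ul) + (ul - t))" by (rule distrib_left[symmetric])
    finally show ?thesis by simp
  qed
qed

lemma hd_lower:
  assumes b: "b > 0" and ul: "ul > 0" "ul \<le> V" and ts: "0 \<le> t" "t \<le> s" "s \<le> V"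
  shows "hd b ul s - hd b ul t \<ge> b / V^2 * (s - t)"
proof -
  have V: "V > 0" using ul by linarith
  have key: "b / x - b / y \<ge> b / V^2 * (y - x)" if "ul \<le> x" "x \<le> y" "y \<le> V" for x y
  proof -
    have "b / x - b / y = b * (y - x) / (y * x)" using that ul by (intro recip_diff) auto
    moreover have "b * (y - x) / V^2 \<le> b * (y - x) / (y * x)"
      using that ul b by (intro divide_left_mono mult_mono) (auto simp: power2_eq_square intro!: mult_mono mult_pos_pos)
    ultimately show ?thesis by simp
  qed
  have KV: "b / V^2 \<le> b / ul^2" using ul b by (intro divide_left_mono power_mono) auto
  consider "ul < t" | "s \<le> ul" | "t \<le> ul" "ul < s" using ts by linarith
  then show ?thesis
  proof cases
    case 1 then show ?thesis using key[of t s] ts by (simp add: hd_def)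
  next
    case 2
    have "b / V^2 * (s - t) \<le> b / ul^2 * (s - t)" using KV ts by (intro mult_right_mono) auto
    then show ?thesis using 2 ts by (simp add: hd_def right_diff_distrib)
  next
    case 3
    have "hd b ul s - hd b ul t = (b / ul - b / s) + b / ul^2 * (ul - t)" using 3 ul by (simp add: hd_def field_simps)
    moreover have "b / V^2 * (s - ul) \<le> b / ul - b / s" using key[of ul s] 3 ts by simp
    moreover have "b / V^2 * (ul - t) \<le> b / ul^2 * (ul - t)" using KV 3 by (intro mult_right_mono) auto
    moreover have "b / V^2 * (s - ul) + b / V^2 * (ul - t) = b / V^2 * (s - t)"
      by (simp only: distrib_left[symmetric]) simp
    ultimately show ?thesis by linarith
  qed
qed



lemma psi_deriv:
  assumes "b > 0" "ul > 0"
  shows "DERIV (\<lambda>x. htil_i b ul x - htil_i b ul t - hd b ul t * (x - t) - K / 2 * (x - t)^2) x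
     :> hd b ul x - hd b ul t - K * (x - t)"
  using assms by (auto intro!: derivative_eq_intros htil_deriv simp: power2_eq_square algebra_simps)

lemma htil_upper:
  assumes b: "b > 0" and ul: "ul > 0"
  shows "htil_i b ul s \<le> htil_i b ul t + hd b ul t * (s - t) + b / ul^2 / 2 * (s - t)^2"
proof -
  define K where "K = b / ul^2"
  define psi where "psi = (\<lambda>x. htil_i b ul x - htil_i b ul t - hd b ul t * (x - t) - K / 2 * (x - t)^2)"
  have d: "DERIV psi x :> hd b ul x - hd b ul t - K * (x - t)" for x
    unfolding psi_def using psi_deriv[OF b ul] .
  have "psi s \<le> psi t"
  proof (cases "t \<le> s")
    case True
    show ?thesis
    proof (rule DERIV_nonpos_imp_nonincreasing[of t s psi, OF True])
      fix x assume "t \<le> x" "x \<le> s"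
      then show "\<exists>y. DERIV psi x :> y \<and> y \<le> 0"
        using hd_upper[OF b ul, of t x] by (intro exI[of _ "hd b ul x - hd b ul t - K * (x - t)"] conjI d) (auto simp: K_def)
    qed
  next
    case False
    show ?thesis
    proof (rule DERIV_nonneg_imp_nondecreasing[of s t psi])
      show "s \<le> t" using False by simp
      fix x assume "s \<le> x" "x \<le> t"
      then show "\<exists>y. DERIV psi x :> y \<and> y \<ge> 0"
      proof (intro exI[of _ "hd b ul x - hd b ul t - K * (x - t)"] conjI d)
        have "K * (x - t) = - (K * (t - x))" by (simp add: algebra_simps)
        then show "hd b ul x - hd b ul t - K * (x - t) \<ge> 0" using hd_upper[OF b ul, of x t] \<open>x \<le> t\<close> by (simp add: K_def)
      qed
    qed
  qed
  then show ?thesis by (simp add: psi_def K_def)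
qed

lemma htil_lower:
  assumes b: "b > 0" and ul: "ul > 0" "ul \<le> V" and st: "0 \<le> s" "s \<le> V" "0 \<le> t" "t \<le> V"
    and m: "m \<le> b / V^2"
  shows "htil_i b ul s \<ge> htil_i b ul t + hd b ul t * (s - t) + m / 2 * (s - t)^2"
proof -
  define psi where "psi = (\<lambda>x. htil_i b ul x - htil_i b ul t - hd b ul t * (x - t) - m / 2 * (x - t)^2)"
  have d: "DERIV psi x :> hd b ul x - hd b ul t - m * (x - t)" for x
    unfolding psi_def using psi_deriv[OF b ul(1)] .
  have "psi s \<ge> psi t"
  proof (cases "t \<le> s")
    case True
    show ?thesis
    proof (rule DERIV_nonneg_imp_nondecreasing[of t s psi, OF True])
      fix x assume x: "t \<le> x" "x \<le> s"
      have "b / V^2 * (x - t) \<le> hd b ul x - hd b ul t" using hd_lower[OF b ul, of t x] x st by auto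
      moreover have "m * (x - t) \<le> b / V^2 * (x - t)" using m x by (intro mult_right_mono) auto
      ultimately show "\<exists>y. DERIV psi x :> y \<and> y \<ge> 0"
        by (intro exI[of _ "hd b ul x - hd b ul t - m * (x - t)"] conjI d) auto
    qed
  next
    case False
    show ?thesis
    proof (rule DERIV_nonpos_imp_nonincreasing[of s t psi])
      show "s \<le> t" using False by simp
      fix x assume x: "s \<le> x" "x \<le> t"
      have "b / V^2 * (t - x) \<le> hd b ul t - hd b ul x" using hd_lower[OF b ul, of x t] x st by auto
      moreover have "m * (t - x) \<le> b / V^2 * (t - x)" using m x by (intro mult_right_mono) auto
      ultimately show "\<exists>y. DERIV psi x :> y \<and> y \<le> 0"
        by (intro exI[of _ "hd b ul x - hd b ul t - m * (x - t)"] conjI d) (auto simp: algebra_simps)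
    qed
  qed
  then show ?thesis by (simp add: psi_def)
qed



definition cc :: "real^'m^'n \<Rightarrow> 'n \<times> 'm \<Rightarrow> real" where
  "cc x p = x $ fst p $ snd p"

lemma cc_simps[simp]: "cc (x - y) p = cc x p - cc y p" "cc (x + y) p = cc x p + cc y p"
  "cc (a *\<^sub>R x) p = a * cc x p" "cc 0 p = 0" "cc (- x) p = - cc x p"
  by (auto simp: cc_def)

lemma cc_eq: "x = y \<longleftrightarrow> (\<forall>p. cc x p = cc y p)"
  by (auto simp: cc_def vec_eq_iff)

definition supp :: "real^'m^'n \<Rightarrow> ('n \<times> 'm) set" where
  "supp x = {p. cc x p \<noteq> 0}"

definition betw :: "real^'m^'n \<Rightarrow> real^'m^'n \<Rightarrow> bool" where
  "betw y x \<longleftrightarrow> (\<forall>p. min 0 (cc x p) \<le> cc y p \<and> cc y p \<le> max 0 (cc x p))"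

lemma betw_refl: "betw x x" by (auto simp: betw_def)

lemma betw_trans: "betw z y \<Longrightarrow> betw y x \<Longrightarrow> betw z x"
  unfolding betw_def by (metis (no_types, opaque_lifting) max.absorb1 max.absorb2 min.absorb1 min.absorb2 nle_le order_trans)

lemma scalar_comb:
  fixes a x x1 x2 y1 y2 :: real
  assumes "0 \<le> a" "a \<le> 1" "min 0 x1 \<le> y1" "y1 \<le> max 0 x1" "min 0 x2 \<le> y2" "y2 \<le> max 0 x2"
    "x * x1 \<ge> 0" "x * x2 \<ge> 0" "a * x1 + (1 - a) * x2 = x" "x = 0 \<Longrightarrow> x1 = 0 \<and> x2 = 0"
  shows "min 0 x \<le> a * y1 + (1 - a) * y2 \<and> a * y1 + (1 - a) * y2 \<le> max 0 x"
proof -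
  consider "x > 0" | "x < 0" | "x = 0" by linarith
  then show ?thesis
  proof cases
    case 1
    then have "x1 \<ge> 0" "x2 \<ge> 0" using assms(7,8) by (auto simp: zero_le_mult_iff)
    then have "0 \<le> y1" "y1 \<le> x1" "0 \<le> y2" "y2 \<le> x2" using assms(3-6) by auto
    then have "0 \<le> a * y1" "a * y1 \<le> a * x1" "0 \<le> (1 - a) * y2" "(1 - a) * y2 \<le> (1 - a) * x2"
      using assms(1,2) by (auto intro: mult_left_mono)
    then show ?thesis using 1 assms(9) by auto
  next
    case 2
    then have "x1 \<le> 0" "x2 \<le> 0" using assms(7,8) by (auto simp: zero_le_mult_iff)
    then have "y1 \<le> 0" "x1 \<le> y1" "y2 \<le> 0" "x2 \<le> y2" using assms(3-6) by auto
    then have "a * y1 \<le> 0" "a * x1 \<le> a * y1" "(1 - a) * y2 \<le> 0" "(1 - a) * x2 \<le> (1 - a) * y2"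
      using assms(1,2) by (auto intro: mult_left_mono simp: mult_nonneg_nonpos)
    then show ?thesis using 2 assms(9) by auto
  next
    case 3 then show ?thesis using assms by auto
  qed
qed



lemma betw_prod: fixes x y :: real shows "min 0 x \<le> y \<Longrightarrow> y \<le> max 0 x \<Longrightarrow> x * y \<ge> 0"
  by (cases "x \<ge> 0") (auto simp: zero_le_mult_iff)

lemma shrink:
  fixes d w :: "real^'m^'n"
  assumes w: "supp w \<subseteq> supp d" and p0: "cc w p0 * cc d p0 > 0"
  shows "\<exists>a>0. card (supp (d - a *\<^sub>R w)) < card (supp d) \<and>
    (\<forall>p. cc w p * cc d p > 0 \<longrightarrow> min 0 (cc d p) \<le> cc (d - a *\<^sub>R w) p \<and> cc (d - a *\<^sub>R w) p \<le> max 0 (cc d p))"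
proof -
  define P where "P = {p. cc w p * cc d p > 0}"
  define a where "a = Min ((\<lambda>p. cc d p / cc w p) ` P)"
  have finP: "finite P" by simp
  have neP: "P \<noteq> {}" using p0 unfolding P_def by blast
  have ratio_pos: "cc d p / cc w p > 0" if "p \<in> P" for p
    using that by (auto simp: P_def zero_less_mult_iff zero_less_divide_iff)
  have "a \<in> (\<lambda>p. cc d p / cc w p) ` P" unfolding a_def using finP neP by (intro Min_in) auto
  then obtain p1 where p1: "p1 \<in> P" "a = cc d p1 / cc w p1" by blast
  have a_le: "a \<le> cc d p / cc w p" if "p \<in> P" for p
    unfolding a_def using finP that by (intro Min_le) auto
  have apos: "a > 0" using ratio_pos p1 by auto
  have w0: "cc w p = 0" if "cc d p = 0" for p using w that unfolding supp_def by blast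
  have z1: "cc (d - a *\<^sub>R w) p1 = 0" using p1 by (auto simp: P_def)
  have sub: "supp (d - a *\<^sub>R w) \<subseteq> supp d - {p1}"
    using z1 w0 by (auto simp: supp_def)
  have p1d: "p1 \<in> supp d" using p1 by (auto simp: P_def supp_def)
  have card: "card (supp (d - a *\<^sub>R w)) < card (supp d)"
  proof -
    have "card (supp (d - a *\<^sub>R w)) \<le> card (supp d - {p1})" by (rule card_mono[OF _ sub]) simp
    also have "\<dots> < card (supp d)" using p1d by (meson card_Diff1_less finite)
    finally show ?thesis .
  qed
  have btw: "min 0 (cc d p) \<le> cc (d - a *\<^sub>R w) p \<and> cc (d - a *\<^sub>R w) p \<le> max 0 (cc d p)"
    if "cc w p * cc d p > 0" for p
  proof -
    have pP: "p \<in> P" using that by (simp add: P_def)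
    have le: "a \<le> cc d p / cc w p" using a_le[OF pP] .
    show ?thesis
    proof (cases "cc d p > 0")
      case True
      then have wp: "cc w p > 0" using that by (auto simp: zero_less_mult_iff)
      then have "a * cc w p \<le> cc d p" using le by (simp add: pos_le_divide_eq)
      moreover have "a * cc w p > 0" using wp apos by simp
      ultimately show ?thesis using True by auto
    next
      case False
      then have dn: "cc d p < 0" using that by (cases "cc d p = 0") auto
      then have wp: "cc w p < 0" using that by (auto simp: zero_less_mult_iff)
      then have "a * cc w p \<ge> cc d p" using le by (simp add: neg_le_divide_eq)
      moreover have "a * cc w p < 0" using wp apos by (simp add: mult_pos_neg)
      ultimately show ?thesis using dn by auto
    qed
  qed
  show ?thesis using apos card btw by blast
qed

lemma step_dir:
  fixes f :: "real^'m^'n \<Rightarrow> 'b::real_normed_vector"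
  assumes lin: "linear f" and K: "K \<ge> 0"
    and IH: "\<And>d0. card (supp d0) < card (supp d) \<Longrightarrow> \<exists>d'. betw d' d0 \<and> f d' = f d0 \<and> norm d' \<le> K * norm (f d0)"
    and w: "f w = 0" "supp w \<subseteq> supp d" and p0: "cc w p0 * cc d p0 > 0"
  shows "\<exists>d'. betw d' d \<and> f d' = f d \<and> norm d' \<le> K * norm (f d)"
proof -
  obtain a where a: "a > 0" "card (supp (d - a *\<^sub>R w)) < card (supp d)"
    "\<And>p. cc w p * cc d p > 0 \<Longrightarrow> min 0 (cc d p) \<le> cc (d - a *\<^sub>R w) p \<and> cc (d - a *\<^sub>R w) p \<le> max 0 (cc d p)"
    using shrink[OF w(2) p0] by blast
  define d1 where "d1 = d - a *\<^sub>R w"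
  have fd1: "f d1 = f d" unfolding d1_def using w(1) lin by (simp add: linear_diff linear_scale)
  obtain d1' where d1': "betw d1' d1" "f d1' = f d1" "norm d1' \<le> K * norm (f d1)"
    using IH[of d1] a(2) unfolding d1_def by blast
  have w0: "cc w p = 0" if "cc d p = 0" for p using w(2) that unfolding supp_def by blast
  show ?thesis
  proof (cases "\<exists>p. cc w p * cc d p < 0")
    case False
    have "betw d1 d" unfolding betw_def
    proof
      fix p
      show "min 0 (cc d p) \<le> cc d1 p \<and> cc d1 p \<le> max 0 (cc d p)"
      proof (cases "cc w p * cc d p > 0")
        case True then show ?thesis using a(3) d1_def by auto
      next
        case F: False
        then have "cc w p * cc d p = 0" using False by (metis linorder_neqE_linordered_idom)
        then have "cc w p = 0" using w0[of p] by (auto simp del: cc_simps)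
        then show ?thesis by (auto simp: d1_def)
      qed
    qed
    then show ?thesis using d1' fd1 betw_trans by metis
  next
    case True
    then obtain q0 where q0: "cc w q0 * cc d q0 < 0" by blast
    have w': "supp (- w) \<subseteq> supp d" using w(2) by (auto simp: supp_def)
    obtain b where b: "b > 0" "card (supp (d - b *\<^sub>R (- w))) < card (supp d)"
      "\<And>p. cc (- w) p * cc d p > 0 \<Longrightarrow> min 0 (cc d p) \<le> cc (d - b *\<^sub>R (- w)) p \<and> cc (d - b *\<^sub>R (- w)) p \<le> max 0 (cc d p)"
      using shrink[OF w', of q0] q0 by auto
    define d2 where "d2 = d + b *\<^sub>R w"
    have d2e: "d - b *\<^sub>R (- w) = d2" by (simp add: d2_def)
    have fd2: "f d2 = f d" unfolding d2_def using w(1) lin by (simp add: linear_add linear_scale)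
    obtain d2' where d2': "betw d2' d2" "f d2' = f d2" "norm d2' \<le> K * norm (f d2)"
      using IH[of d2] b(2) d2e by auto
    define al where "al = b / (a + b)"
    have al: "0 \<le> al" "al \<le> 1" using a(1) b(1) by (auto simp: al_def)
    have al1: "1 - al = a / (a + b)" using a(1) b(1) by (simp add: al_def field_simps)
    define d' where "d' = al *\<^sub>R d1' + (1 - al) *\<^sub>R d2'"
    have "f d' = al *\<^sub>R f d + (1 - al) *\<^sub>R f d"
      unfolding d'_def using lin d1' d2' fd1 fd2 by (simp add: linear_add linear_scale)
    also have "\<dots> = f d" by (simp add: scaleR_left_distrib[symmetric])
    finally have fd': "f d' = f d" .
    have "norm d' \<le> al * norm d1' + (1 - al) * norm d2'"
      unfolding d'_def using al by (metis (no_types, lifting) abs_of_nonneg diff_ge_0_iff_ge norm_scaleR norm_triangle_ineq)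
    also have "\<dots> \<le> al * (K * norm (f d)) + (1 - al) * (K * norm (f d))"
      using d1' d2' fd1 fd2 al by (intro add_mono mult_left_mono) auto
    also have "\<dots> = K * norm (f d)" by (simp add: algebra_simps)
    finally have nd': "norm d' \<le> K * norm (f d)" .
    have "betw d' d" unfolding betw_def
    proof
      fix p
      have b1: "min 0 (cc d1 p) \<le> cc d1' p \<and> cc d1' p \<le> max 0 (cc d1 p)" using d1'(1) unfolding betw_def by blast
      have b2: "min 0 (cc d2 p) \<le> cc d2' p \<and> cc d2' p \<le> max 0 (cc d2 p)" using d2'(1) unfolding betw_def by blast
      have e1: "cc d1 p = cc d p - a * cc w p" by (simp add: d1_def)
      have e2: "cc d2 p = cc d p + b * cc w p" by (simp add: d2_def)
      have s1: "cc d p * cc d1 p \<ge> 0"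
      proof (cases "cc w p * cc d p > 0")
        case True then show ?thesis using a(3)[OF True] betw_prod d1_def by blast
      next
        case False
        then have "a * (cc w p * cc d p) \<le> 0" using a(1) by (simp add: mult_nonneg_nonpos)
        then show ?thesis unfolding e1 by (simp add: algebra_simps power2_eq_square[symmetric])
          (smt (verit) zero_le_power2)
      qed
      have s2: "cc d p * cc d2 p \<ge> 0"
      proof (cases "cc (- w) p * cc d p > 0")
        case True then show ?thesis using b(3)[OF True] betw_prod d2e by metis
      next
        case False
        then have "b * (cc w p * cc d p) \<ge> 0" using b(1) by simp
        then show ?thesis unfolding e2 by (simp add: algebra_simps power2_eq_square[symmetric])
      qed
      have comb: "al * cc d1 p + (1 - al) * cc d2 p = cc d p"
      proof -
        have "b * (cc d p - a * cc w p) + a * (cc d p + b * cc w p) = (a + b) * cc d p" by (simp add: algebra_simps)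
        moreover have "a + b \<noteq> 0" using a(1) b(1) by simp
        ultimately have "b / (a + b) * (cc d p - a * cc w p) + a / (a + b) * (cc d p + b * cc w p) = cc d p"
          by (simp add: add_divide_distrib[symmetric])
        then show ?thesis unfolding e1 e2 al1 unfolding al_def .
      qed
      have z: "cc d p = 0 \<Longrightarrow> cc d1 p = 0 \<and> cc d2 p = 0" using w0 e1 e2 by auto
      have "min 0 (cc d p) \<le> al * cc d1' p + (1 - al) * cc d2' p \<and> al * cc d1' p + (1 - al) * cc d2' p \<le> max 0 (cc d p)"
        by (rule scalar_comb[OF al _ _ _ _ s1 s2 comb z]) (use b1 b2 in auto)
      then show "min 0 (cc d p) \<le> cc d' p \<and> cc d' p \<le> max 0 (cc d p)" by (simp add: d'_def)
    qed
    then show ?thesis using fd' nd' by blast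
  qed
qed



lemma finite_K:
  assumes "finite A" "\<And>S. S \<in> A \<Longrightarrow> \<exists>K\<ge>0. P S K" "\<And>S K K'. P S K \<Longrightarrow> K \<le> K' \<Longrightarrow> P S K'"
  shows "\<exists>K\<ge>(0::real). \<forall>S\<in>A. P S K"
  using assms
proof (induction A rule: finite_induct)
  case empty then show ?case by auto
next
  case (insert x F)
  obtain K1 where K1: "K1 \<ge> 0" "\<forall>S\<in>F. P S K1" using insert by auto
  obtain K2 where K2: "K2 \<ge> 0" "P x K2" using insert.prems(1) by blast
  show ?case using K1 K2 insert.prems(2) by (intro exI[of _ "max K1 K2"]) (auto intro: max.cobounded1 max.cobounded2)
qed

lemma supp_sub_subspace: "subspace {w :: real^'m^'n. supp w \<subseteq> S}"
  unfolding subspace_def supp_def by (auto simp: subset_iff) (metis add.right_neutral)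

lemma indep_bound:
  fixes f :: "real^'m^'n \<Rightarrow> 'b::euclidean_space"
  assumes lin: "linear f"
  shows "\<exists>K\<ge>0. \<forall>d. (\<forall>w. f w = 0 \<longrightarrow> supp w \<subseteq> supp d \<longrightarrow> w = 0) \<longrightarrow> norm d \<le> K * norm (f d)"
proof -
  define P where "P = (\<lambda>S K. \<forall>d. supp d = S \<longrightarrow> (\<forall>w. f w = 0 \<longrightarrow> supp w \<subseteq> supp d \<longrightarrow> w = 0) \<longrightarrow> norm d \<le> K * norm (f d))"
  have "\<exists>K\<ge>0. \<forall>S\<in>UNIV. P S K"
  proof (rule finite_K)
    show "finite (UNIV :: ('n \<times> 'm) set set)" by simp
  next
    fix S K K' assume "P S K" "K \<le> K'"
    then show "P S K'" unfolding P_def by (metis (no_types, lifting) mult_right_mono norm_ge_zero order_trans)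
  next
    fix S :: "('n \<times> 'm) set"
    show "\<exists>K\<ge>0. P S K"
    proof (cases "\<forall>w. f w = 0 \<longrightarrow> supp w \<subseteq> S \<longrightarrow> w = 0")
      case False
      then show ?thesis unfolding P_def by auto
    next
      case True
      have bl: "bounded_linear f" using lin linear_conv_bounded_linear by blast
      have sub: "subspace {w :: real^'m^'n. supp w \<subseteq> S}" by (rule supp_sub_subspace)
      obtain e where e: "e > 0" "\<forall>x\<in>{w. supp w \<subseteq> S}. norm (f x) \<ge> e * norm x"
        using injective_imp_isometric[OF closed_subspace[OF sub] sub bl] True by auto
      show ?thesis
      proof (intro exI[of _ "1 / e"] conjI)
        show "0 \<le> 1 / e" using e by simp
        show "P S (1 / e)" unfolding P_def
        proof (intro allI impI)
          fix d :: "real^'m^'n" assume "supp d = S"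
          then have "e * norm d \<le> norm (f d)" using e by auto
          then show "norm d \<le> 1 / e * norm (f d)" using e by (simp add: field_simps)
        qed
      qed
    qed
  qed
  then show ?thesis unfolding P_def by auto
qed

lemma conformal_bound:
  fixes f :: "real^'m^'n \<Rightarrow> 'b::euclidean_space"
  assumes lin: "linear f"
  shows "\<exists>K\<ge>0. \<forall>d. \<exists>d'. betw d' d \<and> f d' = f d \<and> norm d' \<le> K * norm (f d)"
proof -
  obtain K where K: "K \<ge> 0" "\<And>d. (\<forall>w. f w = 0 \<longrightarrow> supp w \<subseteq> supp d \<longrightarrow> w = 0) \<Longrightarrow> norm d \<le> K * norm (f d)"
    using indep_bound[OF lin] by blast
  have main: "\<And>d. card (supp d) = n \<Longrightarrow> \<exists>d'. betw d' d \<and> f d' = f d \<and> norm d' \<le> K * norm (f d)" for n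
  proof (induction n rule: less_induct)
    case (less n)
    fix d :: "real^'m^'n" assume dn: "card (supp d) = n"
    have IH: "\<And>d0. card (supp d0) < card (supp d) \<Longrightarrow> \<exists>d'. betw d' d0 \<and> f d' = f d0 \<and> norm d' \<le> K * norm (f d0)"
      using less.IH dn by blast
    show "\<exists>d'. betw d' d \<and> f d' = f d \<and> norm d' \<le> K * norm (f d)"
    proof (cases "\<forall>w. f w = 0 \<longrightarrow> supp w \<subseteq> supp d \<longrightarrow> w = 0")
      case True
      then show ?thesis using K(2)[OF True] betw_refl by blast
    next
      case False
      then obtain w where w: "f w = 0" "supp w \<subseteq> supp d" "w \<noteq> 0" by blast
      then obtain p0 where p0: "cc w p0 \<noteq> 0" using cc_eq[of w 0] by auto
      then have "cc d p0 \<noteq> 0" using w(2) unfolding supp_def by blast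
      then have ne: "cc w p0 * cc d p0 \<noteq> 0" using p0 by simp
      show ?thesis
      proof (cases "cc w p0 * cc d p0 > 0")
        case True
        show ?thesis by (rule step_dir[OF lin K(1) IH w(1,2) True])
      next
        case False
        then have "cc w p0 * cc d p0 < 0" using ne by linarith
        then have "cc (- w) p0 * cc d p0 > 0" by simp
        moreover have "f (- w) = 0" using w(1) lin by (simp add: linear_neg)
        moreover have "supp (- w) \<subseteq> supp d" using w(2) by (simp add: supp_def)
        ultimately show ?thesis using step_dir[OF lin K(1) IH] by blast
      qed
    qed
  qed
  show ?thesis using main K(1) by blast
qed



lemma linA_nth: "linA v x $ i = v $ i \<bullet> x $ i" by (simp add: linA_def)

lemma linear_linA: "linear (linA v)"
  by (rule linearI) (auto simp: linA_def vec_eq_iff inner_add_right)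

lemma bl_linA: "bounded_linear (linA v)"
  using linear_linA linear_conv_bounded_linear by blast

lemma norm1_pos:
  assumes "nondegenerate v" shows "norm1 (v $ i) > 0"
proof -
  obtain j where j: "v $ i $ j \<noteq> 0" using assms unfolding nondegenerate_def by blast
  have "\<bar>v $ i $ j\<bar> \<le> norm1 (v $ i)" unfolding norm1_def
    by (rule member_le_sum) auto
  then show ?thesis using j unfolding norm1_def
    by (metis abs_ge_zero abs_le_zero_iff leI order.trans sum_nonneg)
qed

lemma norm1B_pos: fixes B :: "real^'n" assumes "\<forall>i. B $ i > 0" shows "norm1 B > 0"
proof -
  obtain i :: 'n where True by blast
  have "\<bar>B $ i\<bar> \<le> norm1 B" unfolding norm1_def by (rule member_le_sum) auto
  then show ?thesis using assms[rule_format, of i] by linarith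
qed

lemma ulow_pos: assumes "nondegenerate v" "\<forall>i. B $ i > 0" shows "ulow v B i > 0"
  unfolding ulow_def using norm1_pos[OF assms(1)] norm1B_pos[OF assms(2)] assms(2) by simp

lemma ulow_le: assumes "nondegenerate v" "\<forall>i. B $ i > 0" shows "ulow v B i \<le> norm1 (v $ i)"
proof -
  have "\<bar>B $ i\<bar> \<le> norm1 B" unfolding norm1_def by (rule member_le_sum) auto
  then have "B $ i / norm1 B \<le> 1" using norm1B_pos[OF assms(2)] assms(2) by simp
  then have "B $ i / norm1 B * norm1 (v $ i) \<le> 1 * norm1 (v $ i)"
    using norm1_pos[OF assms(1), of i] by (intro mult_right_mono) auto
  then show ?thesis unfolding ulow_def by simp
qed

lemma simplex_le1: assumes "x \<in> simplexes" shows "0 \<le> x $ i $ j" "x $ i $ j \<le> 1"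
proof -
  show "0 \<le> x $ i $ j" using assms by (simp add: simplexes_def)
  have "x $ i $ j \<le> (\<Sum>k\<in>UNIV. x $ k $ j)" using assms by (intro member_le_sum) (auto simp: simplexes_def)
  then show "x $ i $ j \<le> 1" using assms by (simp add: simplexes_def)
qed

lemma linA_range:
  assumes "nondegenerate v" "x \<in> simplexes"
  shows "0 \<le> linA v x $ i" "linA v x $ i \<le> norm1 (v $ i)"
proof -
  have vnn: "\<And>j. v $ i $ j \<ge> 0" using assms(1) by (simp add: nondegenerate_def)
  have e: "linA v x $ i = (\<Sum>j\<in>UNIV. v $ i $ j * x $ i $ j)" by (simp add: linA_def inner_vec_def)
  show "0 \<le> linA v x $ i" unfolding e using vnn simplex_le1(1)[OF assms(2)] by (intro sum_nonneg) simp
  have "(\<Sum>j\<in>UNIV. v $ i $ j * x $ i $ j) \<le> (\<Sum>j\<in>UNIV. v $ i $ j)"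
    using vnn simplex_le1[OF assms(2)] by (intro sum_mono) (simp add: mult_left_le)
  also have "\<dots> = norm1 (v $ i)" using vnn by (simp add: norm1_def)
  finally show "linA v x $ i \<le> norm1 (v $ i)" unfolding e .
qed

lemma Lc_ge: "B $ i / (ulow v B i)^2 \<le> Lc v B"
  unfolding Lc_def by (rule Max_ge) auto

lemma muc_le: "muc v B \<le> B $ i / (norm1 (v $ i))^2"
  unfolding muc_def by (rule Min_le) auto

lemma muc_pos: assumes "nondegenerate v" "\<forall>i. B $ i > 0" shows "muc v B > 0"
proof -
  have "muc v B \<in> range (\<lambda>i. B $ i / (norm1 (v $ i))^2)" unfolding muc_def by (rule Min_in) auto
  then obtain i where "muc v B = B$i/(norm1 (v$i))^2" by auto
  then show ?thesis by (metis assms(2) divide_pos_pos norm1_pos[OF assms(1)] zero_less_power)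
qed

lemma Lc_pos: fixes v :: "real^'m^'n" assumes "nondegenerate v" "\<forall>i. B $ i > 0" shows "Lc v B > 0"
proof -
  obtain i :: 'n where True by blast
  show ?thesis using Lc_ge[of B i v] ulow_pos[OF assms, of i] assms(2) by (smt (verit) divide_pos_pos zero_less_power)
qed

lemma onorm_pos: fixes v :: "real^'m^'n" assumes "nondegenerate v" shows "onorm (linA v) > 0"
proof -
  obtain i :: 'n where True by blast
  have "linA v v $ i = v $ i \<bullet> v $ i" by (simp add: linA_nth)
  moreover have "v $ i \<noteq> 0" using norm1_pos[OF assms, of i] by (auto simp: norm1_def)
  ultimately have "linA v v \<noteq> 0" by auto
  then show ?thesis using onorm_pos_lt[OF bl_linA] by blast
qed

lemma simplexes_ne: "(simplexes :: (real^'m^'n) set) \<noteq> {}"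
proof -
  obtain i0 :: 'n where True by blast
  have "((\<chi> i j. if i = i0 then 1 else 0) :: real^'m^'n) \<in> simplexes"
    by (simp add: simplexes_def)
  then show ?thesis by blast
qed

lemma simplexes_convex: "convex simplexes"
  unfolding convex_def simplexes_def
  by (auto simp: sum.distrib sum_distrib_left[symmetric])

lemma simplexes_closed: "closed simplexes"
proof -
  have "simplexes = (\<Inter>i. \<Inter>j. {x. 0 \<le> x $ i $ j}) \<inter> (\<Inter>j. {x. (\<Sum>i\<in>UNIV. x $ i $ j) = 1})"
    by (auto simp: simplexes_def)
  also have "closed \<dots>"
    by (intro closed_Int closed_INT ballI closed_Collect_le closed_Collect_eq continuous_intros)
  finally show ?thesis .
qed

lemma simplexes_bounded: "bounded simplexes"
proof -
  have "norm x \<le> real CARD('n) * real CARD('m)" if "x \<in> simplexes" for x :: "real^'m^'n"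
  proof -
    have "norm x \<le> (\<Sum>i\<in>UNIV. norm (x $ i))" unfolding norm_vec_def by (rule L2_set_le_sum) simp
    also have "\<dots> \<le> (\<Sum>i\<in>UNIV. \<Sum>j\<in>UNIV. \<bar>x $ i $ j\<bar>)" by (intro sum_mono norm_le_l1_cart)
    also have "\<dots> \<le> (\<Sum>i\<in>(UNIV::'n set). \<Sum>j\<in>(UNIV::'m set). 1)"
      using simplex_le1[OF that] by (intro sum_mono) auto
    finally show ?thesis by simp
  qed
  then show ?thesis unfolding bounded_iff by blast
qed

lemma simplexes_compact: "compact simplexes"
  using simplexes_closed simplexes_bounded compact_eq_bounded_closed by blast



definition gF :: "real^'m^'n \<Rightarrow> real^'n \<Rightarrow> real^'m^'n \<Rightarrow> real^'m^'n" where
  "gF v B x = (\<chi> i. hd (B $ i) (ulow v B i) (linA v x $ i) *\<^sub>R v $ i)"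

lemma Fobj_eq: "Fobj v B x = (\<Sum>i\<in>UNIV. htil_i (B $ i) (ulow v B i) (v $ i \<bullet> x $ i))"
  by (simp add: Fobj_def htil_def linA_nth)

lemma gF_inner: "gF v B x \<bullet> h = (\<Sum>i\<in>UNIV. hd (B $ i) (ulow v B i) (linA v x $ i) * (v $ i \<bullet> h $ i))"
  by (simp add: gF_def inner_vec_def sum_distrib_left mult.assoc)

lemma Fobj_deriv:
  fixes v :: "real^'m^'n"
  assumes nd: "nondegenerate v" and Bp: "\<forall>i. B $ i > 0"
  shows "(Fobj v B has_derivative (\<lambda>h. gF v B x \<bullet> h)) (at x)"
proof -
  have each: "((\<lambda>x. htil_i (B $ i) (ulow v B i) (v $ i \<bullet> x $ i)) has_derivative
      (\<lambda>h. (v $ i \<bullet> h $ i) * hd (B $ i) (ulow v B i) (v $ i \<bullet> x $ i))) (at x)" for i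
  proof (rule DERIV_compose_FDERIV[where g="\<lambda>x. v $ i \<bullet> x $ i"])
    show "DERIV (htil_i (B $ i) (ulow v B i)) (v $ i \<bullet> x $ i) :> hd (B $ i) (ulow v B i) (v $ i \<bullet> x $ i)"
      using htil_deriv Bp ulow_pos[OF nd Bp] by blast
    have "bounded_linear (\<lambda>x::real^'m^'n. v $ i \<bullet> x $ i)"
      by (rule bounded_linear_compose[OF bounded_linear_inner_right bounded_linear_vec_nth])
    then show "((\<lambda>x. v $ i \<bullet> x $ i) has_derivative (\<lambda>x. v $ i \<bullet> x $ i)) (at x)"
      by (rule bounded_linear_imp_has_derivative)
  qed
  have "((\<lambda>x. \<Sum>i\<in>UNIV. htil_i (B $ i) (ulow v B i) (v $ i \<bullet> x $ i)) has_derivative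
      (\<lambda>h. \<Sum>i\<in>UNIV. (v $ i \<bullet> h $ i) * hd (B $ i) (ulow v B i) (v $ i \<bullet> x $ i))) (at x)"
    by (rule has_derivative_sum) (rule each)
  then show ?thesis unfolding Fobj_eq[abs_def]
    by (rule has_derivative_eq_rhs) (auto simp: gF_inner linA_nth mult.commute)
qed

lemma grad_eq:
  assumes nd: "nondegenerate v" and Bp: "\<forall>i. B $ i > 0"
  shows "grad (Fobj v B) x = gF v B x"
proof -
  have d: "(Fobj v B has_derivative (\<lambda>h. gF v B x \<bullet> h)) (at x)" by (rule Fobj_deriv[OF nd Bp])
  have "(Fobj v B has_derivative (\<lambda>h. grad (Fobj v B) x \<bullet> h)) (at x)"
    unfolding grad_def by (rule someI[of _ "gF v B x"]) (rule d)
  then have "(\<lambda>h. grad (Fobj v B) x \<bullet> h) = (\<lambda>h. gF v B x \<bullet> h)" using d by (rule has_derivative_unique)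
  then have "(grad (Fobj v B) x - gF v B x) \<bullet> (grad (Fobj v B) x - gF v B x) = 0"
    by (metis inner_diff_left right_minus_eq)
  then show ?thesis by simp
qed

lemma Fobj_cont: assumes nd: "nondegenerate v" and Bp: "\<forall>i. B $ i > 0"
  shows "continuous_on S (Fobj v B)"
  using Fobj_deriv[OF nd Bp] has_derivative_continuous
  by (metis continuous_at_imp_continuous_on)

lemma sq_norm_vec: "(norm (z :: real^'n))^2 = (\<Sum>i\<in>UNIV. (z $ i)^2)"
  unfolding power2_norm_eq_inner by (simp add: inner_vec_def power2_eq_square)

lemma Fobj_upper:
  assumes nd: "nondegenerate v" and Bp: "\<forall>i. B $ i > 0"
  shows "Fobj v B y \<le> Fobj v B x + gF v B x \<bullet> (y - x) + Lc v B / 2 * (onorm (linA v))^2 * (norm (y - x))^2"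
proof -
  let ?u = "\<lambda>i. linA v x $ i" and ?u' = "\<lambda>i. linA v y $ i" and ?L = "Lc v B"
  have dlt: "?u' i - ?u i = linA v (y - x) $ i" for i by (simp add: linA_nth inner_diff_right)
  have "Fobj v B y = (\<Sum>i\<in>UNIV. htil_i (B $ i) (ulow v B i) (?u' i))" by (simp add: Fobj_eq linA_nth)
  also have "\<dots> \<le> (\<Sum>i\<in>UNIV. htil_i (B $ i) (ulow v B i) (?u i) + hd (B $ i) (ulow v B i) (?u i) * (?u' i - ?u i)
       + ?L / 2 * (linA v (y - x) $ i)^2)"
  proof (rule sum_mono)
    fix i
    have "htil_i (B $ i) (ulow v B i) (?u' i) \<le> htil_i (B $ i) (ulow v B i) (?u i) + hd (B $ i) (ulow v B i) (?u i) * (?u' i - ?u i)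
       + B $ i / (ulow v B i)^2 / 2 * (?u' i - ?u i)^2"
      by (rule htil_upper) (use Bp ulow_pos[OF nd Bp] in auto)
    moreover have "B $ i / (ulow v B i)^2 / 2 * (?u' i - ?u i)^2 \<le> ?L / 2 * (?u' i - ?u i)^2"
      using Lc_ge[of B i v] by (intro mult_right_mono) auto
    ultimately show "htil_i (B $ i) (ulow v B i) (?u' i) \<le> htil_i (B $ i) (ulow v B i) (?u i) + hd (B $ i) (ulow v B i) (?u i) * (?u' i - ?u i)
       + ?L / 2 * (linA v (y - x) $ i)^2" using dlt[of i] by simp
  qed
  also have "\<dots> = Fobj v B x + gF v B x \<bullet> (y - x) + ?L / 2 * (norm (linA v (y - x)))^2"
    by (simp add: sum.distrib Fobj_eq gF_inner linA_nth sq_norm_vec sum_distrib_left inner_diff_right sum_subtractf right_diff_distrib)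
  also have "\<dots> \<le> Fobj v B x + gF v B x \<bullet> (y - x) + ?L / 2 * (onorm (linA v) * norm (y - x))^2"
    using Lc_pos[OF nd Bp] onorm[OF bl_linA, of v "y - x"]
    by (intro add_left_mono mult_left_mono power_mono) auto
  finally show ?thesis by (simp add: power_mult_distrib)
qed

lemma Fobj_lower:
  assumes nd: "nondegenerate v" and Bp: "\<forall>i. B $ i > 0" and xy: "x \<in> simplexes" "y \<in> simplexes"
  shows "Fobj v B y \<ge> Fobj v B x + gF v B x \<bullet> (y - x) + muc v B / 2 * (norm (linA v (y - x)))^2"
proof -
  let ?u = "\<lambda>i. linA v x $ i" and ?u' = "\<lambda>i. linA v y $ i" and ?m = "muc v B"
  have dlt: "?u' i - ?u i = linA v (y - x) $ i" for i by (simp add: linA_nth inner_diff_right)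
  have "Fobj v B x + gF v B x \<bullet> (y - x) + ?m / 2 * (norm (linA v (y - x)))^2
     = (\<Sum>i\<in>UNIV. htil_i (B $ i) (ulow v B i) (?u i) + hd (B $ i) (ulow v B i) (?u i) * (?u' i - ?u i)
       + ?m / 2 * (?u' i - ?u i)^2)"
    by (simp add: sum.distrib Fobj_eq gF_inner linA_nth sq_norm_vec sum_distrib_left inner_diff_right sum_subtractf right_diff_distrib)
  also have "\<dots> \<le> (\<Sum>i\<in>UNIV. htil_i (B $ i) (ulow v B i) (?u' i))"
  proof (rule sum_mono)
    fix i
    show "htil_i (B $ i) (ulow v B i) (?u i) + hd (B $ i) (ulow v B i) (?u i) * (?u' i - ?u i)
       + ?m / 2 * (?u' i - ?u i)^2 \<le> htil_i (B $ i) (ulow v B i) (?u' i)"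
      by (rule htil_lower[where V="norm1 (v $ i)"])
        (use Bp ulow_pos[OF nd Bp] ulow_le[OF nd Bp] linA_range[OF nd xy(1)] linA_range[OF nd xy(2)] muc_le in auto)
  qed
  also have "\<dots> = Fobj v B y" by (simp add: Fobj_eq linA_nth)
  finally show ?thesis .
qed



definition colsum :: "real^'m^'n \<Rightarrow> real^'m" where
  "colsum d = (\<chi> j. \<Sum>i\<in>UNIV. d $ i $ j)"

lemma linA_diff: "linA v (x - y) = linA v x - linA v y"
  by (simp add: linA_def vec_eq_iff inner_diff_right)

lemma linA_add: "linA v (x + y) = linA v x + linA v y"
  by (simp add: linA_def vec_eq_iff inner_add_right)

lemma linear_fpair: "linear (\<lambda>d::real^'m^'n. (linA v d, colsum d))"
  by (rule linearI) (auto simp: linA_def colsum_def vec_eq_iff inner_add_right sum.distrib sum_distrib_left)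

lemma hoffman_prop:
  fixes v :: "real^'m^'n"
  shows "hoffman simplexes (linA v) \<ge> 0 \<and> (\<forall>z x. simplexes \<inter> {x. linA v x = z} \<noteq> {} \<longrightarrow> x \<in> simplexes \<longrightarrow>
     norm (x - closest_point (simplexes \<inter> {x. linA v x = z}) x) \<le> hoffman simplexes (linA v) * norm (linA v x - z))"
proof -
  define f where "f = (\<lambda>d::real^'m^'n. (linA v d, colsum d))"
  have lf: "linear f" unfolding f_def by (rule linear_fpair)
  obtain K where K: "K \<ge> 0" "\<And>d. \<exists>d'. betw d' d \<and> f d' = f d \<and> norm d' \<le> K * norm (f d)"
    using conformal_bound[OF lf] by blast
  define Hs where "Hs = {H. H > 0 \<and> (\<forall>z. simplexes \<inter> {x. linA v x = z} \<noteq> {} \<longrightarrow>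
      (\<forall>x\<in>simplexes. norm (x - closest_point (simplexes \<inter> {x. linA v x = z}) x) \<le> H * norm (linA v x - z)))}"
  have hdef: "hoffman simplexes (linA v) = Inf Hs" unfolding hoffman_def Hs_def by simp
  have bnd: "norm (x - closest_point (simplexes \<inter> {x. linA v x = z}) x) \<le> K * norm (linA v x - z)"
    if ne: "simplexes \<inter> {x. linA v x = z} \<noteq> {}" and x: "x \<in> simplexes" for z x
  proof -
    define S where "S = simplexes \<inter> {x. linA v x = z}"
    have clS: "closed S" unfolding S_def
      by (intro closed_Int simplexes_closed closed_Collect_eq linear_continuous_on[OF bl_linA] continuous_on_const)
    obtain y0 where y0: "y0 \<in> simplexes" "linA v y0 = z" using ne by blast
    define d where "d = y0 - x"
    obtain d' where d': "betw d' d" "f d' = f d" "norm d' \<le> K * norm (f d)" using K(2) by blast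
    have fd: "f d = (z - linA v x, 0)"
    proof -
      have "linA v d = z - linA v x" using y0 by (simp add: d_def linA_diff)
      moreover have "colsum d = 0" using y0(1) x by (simp add: d_def colsum_def vec_eq_iff simplexes_def sum_subtractf)
      ultimately show ?thesis by (simp add: f_def)
    qed
    define y where "y = x + d'"
    have yS: "y \<in> S"
    proof -
      have "0 \<le> y $ i $ j" for i j
      proof -
        have "min 0 (cc d (i, j)) \<le> cc d' (i, j)" using d'(1) unfolding betw_def by blast
        then have "min 0 (y0 $ i $ j - x $ i $ j) \<le> d' $ i $ j" by (simp add: cc_def d_def)
        then show ?thesis using simplex_le1(1)[OF x, of i j] simplex_le1(1)[OF y0(1), of i j] by (simp add: y_def)
      qed
      moreover have "(\<Sum>i\<in>UNIV. y $ i $ j) = 1" for j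
      proof -
        have "colsum d' = 0" using d'(2) fd by (simp add: f_def)
        then have "(\<Sum>i\<in>UNIV. d' $ i $ j) = 0" by (simp add: colsum_def vec_eq_iff)
        then show ?thesis using x by (simp add: y_def sum.distrib simplexes_def)
      qed
      moreover have "linA v y = z"
      proof -
        have "linA v d' = z - linA v x" using d'(2) fd by (simp add: f_def)
        then show ?thesis by (simp add: y_def linA_add)
      qed
      ultimately show ?thesis by (simp add: S_def simplexes_def)
    qed
    have "norm (x - closest_point S x) = dist x (closest_point S x)" by (simp add: dist_norm)
    also have "\<dots> \<le> dist x y" by (rule closest_point_le[OF clS yS])
    also have "\<dots> = norm d'" by (simp add: y_def dist_norm)
    also have "\<dots> \<le> K * norm (f d)" by (rule d'(3))
    also have "norm (f d) = norm (linA v x - z)" by (simp add: fd norm_Pair norm_minus_commute)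
    finally show ?thesis by (simp add: S_def)
  qed
  have K1: "K + 1 \<in> Hs" unfolding Hs_def
  proof (intro CollectI conjI allI impI ballI)
    show "0 < K + 1" using K(1) by simp
    fix z and x :: "real^'m^'n" assume ne: "simplexes \<inter> {x. linA v x = z} \<noteq> {}" and x: "x \<in> simplexes"
    have "K * norm (linA v x - z) \<le> (K + 1) * norm (linA v x - z)" by (simp add: algebra_simps)
    then show "norm (x - closest_point (simplexes \<inter> {x. linA v x = z}) x) \<le> (K + 1) * norm (linA v x - z)"
      using bnd[OF ne x] by linarith
  qed
  have Hne: "Hs \<noteq> {}" using K1 by blast
  have Hpos: "H > 0" if "H \<in> Hs" for H using that by (simp add: Hs_def)
  have inf0: "Inf Hs \<ge> 0" by (rule cInf_greatest[OF Hne]) (use Hpos in fastforce)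
  have bdd: "bdd_below Hs" unfolding bdd_below_def using Hpos by (metis less_le)
  have main: "norm (x - closest_point (simplexes \<inter> {x. linA v x = z}) x) \<le> Inf Hs * norm (linA v x - z)"
    if ne: "simplexes \<inter> {x. linA v x = z} \<noteq> {}" and x: "x \<in> simplexes" for z x
  proof -
    let ?D = "norm (x - closest_point (simplexes \<inter> {x. linA v x = z}) x)" and ?r = "norm (linA v x - z)"
    have all: "?D \<le> H * ?r" if "H \<in> Hs" for H using that ne x unfolding Hs_def by blast
    show ?thesis
    proof (cases "?r = 0")
      case True then show ?thesis using all[OF K1] by simp
    next
      case False
      then have rp: "?r > 0" by simp
      have "?D / ?r \<le> Inf Hs"
      proof (rule cInf_greatest[OF Hne])
        fix H assume "H \<in> Hs"
        then show "?D / ?r \<le> H" using all rp by (simp add: divide_le_eq)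
      qed
      then show ?thesis using rp by (simp add: divide_le_eq)
    qed
  qed
  show ?thesis using inf0 main unfolding hdef by blast
qed



lemma proj_model:
  fixes x y p g :: "real^'m^'n"
  assumes LF: "LF > 0" and p: "p = closest_point simplexes (x - (1 / LF) *\<^sub>R g)" and y: "y \<in> simplexes"
  shows "g \<bullet> (p - x) + LF / 2 * (norm (p - x))^2 \<le> g \<bullet> (y - x) + LF / 2 * (norm (y - x))^2"
proof -
  define a where "a = x - (1 / LF) *\<^sub>R g"
  have pX: "p \<in> simplexes" unfolding p by (rule closest_point_in_set[OF simplexes_closed simplexes_ne])
  have "inner (a - p) (y - p) \<le> 0"
    by (rule any_closest_point_dot[OF simplexes_convex simplexes_closed pX y])
      (use closest_point_le[OF simplexes_closed] in \<open>auto simp: p a_def\<close>)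
  define u where "u = y - p"
  define w where "w = p - x"
  have yx: "y - x = u + w" by (simp add: u_def w_def)
  have eq: "inner (a - p) u = - inner w u - (1 / LF) * inner g u"
    by (simp add: a_def w_def inner_diff_left algebra_simps)
  have e: "inner g u = - LF * inner w u - LF * inner (a - p) u" using eq LF by (simp add: field_simps)
  have "LF * inner (a - p) u \<le> 0" using \<open>inner (a - p) (y - p) \<le> 0\<close> LF
    unfolding u_def by (simp add: mult_nonneg_nonpos)
  then have gu: "inner g u \<ge> - LF * inner w u" using e by linarith
  have n: "(norm (u + w))^2 = (norm u)^2 + 2 * inner u w + (norm w)^2"
    by (simp add: power2_norm_eq_inner inner_add_left inner_add_right inner_commute)
  have "g \<bullet> (y - x) + LF / 2 * (norm (y - x))^2 - (g \<bullet> (p - x) + LF / 2 * (norm (p - x))^2)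
      = inner g u + LF * inner u w + LF / 2 * (norm u)^2"
    unfolding yx n by (simp add: w_def[symmetric] inner_add_right algebra_simps)
  also have "\<dots> \<ge> 0"
  proof -
    have "LF / 2 * (norm u)^2 \<ge> 0" using LF by simp
    then show ?thesis using gu by (simp add: inner_commute)
  qed
  finally show ?thesis by simp
qed



lemma one_step:
  fixes v :: "real^'m^'n" and B :: "real^'n"
  assumes nd: "nondegenerate v" and Bp: "\<forall>i. B $ i > 0"
    and x: "x \<in> simplexes"
    and xbar: "xbar \<in> simplexes" "\<forall>y\<in>simplexes. Fobj v B xbar \<le> Fobj v B y"
    and xp: "xp = closest_point simplexes (x - (1 / (Lc v B * (onorm (linA v))^2)) *\<^sub>R grad (Fobj v B) x)"
  shows "Fobj v B xp - Fobj v B xbar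
     \<le> (1 - muc v B / max (muc v B) (Lc v B * (hoffman simplexes (linA v))^2 * (onorm (linA v))^2))
        * (Fobj v B x - Fobj v B xbar)"
proof -
  define F where "F = Fobj v B"
  define A where "A = linA v"
  define L where "L = Lc v B"
  define N where "N = onorm (linA v)"
  define H where "H = hoffman simplexes (linA v)"
  define mu where "mu = muc v B"
  define LF where "LF = L * N^2"
  define g where "g = gF v B x"
  define al where "al = mu / max mu (L * H^2 * N^2)"
  define Fs where "Fs = F xbar"
  have LFp: "LF > 0" unfolding LF_def L_def N_def using Lc_pos[OF nd Bp] onorm_pos[OF nd] by simp
  have mup: "mu > 0" unfolding mu_def using muc_pos[OF nd Bp] .
  have alp: "0 < al" "al \<le> 1" using mup by (auto simp: al_def)
  have Hp: "H \<ge> 0" using hoffman_prop[of v] by (simp add: H_def)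
  have alH: "al * (LF * H^2) \<le> mu"
  proof -
    have "al * (LF * H^2) = mu * ((L * H^2 * N^2) / max mu (L * H^2 * N^2))"
      by (simp add: al_def LF_def algebra_simps)
    also have "\<dots> \<le> mu * 1"
      using mup by (intro mult_left_mono) (auto simp: divide_le_eq)
    finally show ?thesis by simp
  qed
  have xp': "xp = closest_point simplexes (x - (1 / LF) *\<^sub>R g)"
    using xp by (simp add: grad_eq[OF nd Bp] g_def LF_def L_def N_def)
  define S where "S = simplexes \<inter> {y. linA v y = linA v xbar}"
  have Sne: "S \<noteq> {}" using xbar by (auto simp: S_def)
  have clS: "closed S" unfolding S_def
    by (intro closed_Int simplexes_closed closed_Collect_eq linear_continuous_on[OF bl_linA] continuous_on_const)
  define pi where "pi = closest_point S x"
  have piS: "pi \<in> S" unfolding pi_def by (rule closest_point_in_set[OF clS Sne])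
  have piX: "pi \<in> simplexes" and Api: "A pi = A xbar" using piS by (auto simp: S_def A_def)
  have Fpi: "F pi = Fs" unfolding F_def Fs_def Fobj_def using Api by (simp add: A_def)
  define R where "R = norm (A (pi - x))"
  have hof: "norm (x - pi) \<le> H * norm (A x - A xbar)"
    using hoffman_prop[of v] Sne x by (auto simp: H_def pi_def S_def A_def)
  have "norm (A x - A xbar) = R" unfolding R_def using Api by (simp add: A_def linA_diff norm_minus_commute)
  then have hof2: "(norm (pi - x))^2 \<le> H^2 * R^2"
    using hof Hp by (metis norm_minus_commute norm_ge_zero power_mono power_mult_distrib)
  have low: "Fs \<ge> F x + g \<bullet> (pi - x) + mu / 2 * R^2"
    using Fobj_lower[OF nd Bp x piX] Fpi by (simp add: F_def g_def mu_def R_def A_def)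
  define y where "y = x + al *\<^sub>R (pi - x)"
  have yX: "y \<in> simplexes"
  proof -
    have "y = (1 - al) *\<^sub>R x + al *\<^sub>R pi" by (simp add: y_def algebra_simps)
    then show ?thesis using simplexes_convex x piX alp unfolding convex_def by auto
  qed
  have up: "F xp \<le> F x + g \<bullet> (xp - x) + LF / 2 * (norm (xp - x))^2"
    using Fobj_upper[OF nd Bp, of xp x] by (simp add: F_def g_def LF_def L_def N_def)
  have "g \<bullet> (xp - x) + LF / 2 * (norm (xp - x))^2 \<le> g \<bullet> (y - x) + LF / 2 * (norm (y - x))^2"
    by (rule proj_model[OF LFp xp' yX])
  also have "\<dots> = al * (g \<bullet> (pi - x)) + LF / 2 * al^2 * (norm (pi - x))^2"
    using alp by (simp add: y_def power_mult_distrib)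
  also have "\<dots> \<le> al * (Fs - F x - mu / 2 * R^2) + LF / 2 * al^2 * (H^2 * R^2)"
    using low hof2 alp LFp by (intro add_mono mult_left_mono) auto
  also have "\<dots> \<le> al * (Fs - F x)"
  proof -
    have "al * (LF * H^2) * R^2 \<le> mu * R^2" using alH by (intro mult_right_mono) auto
    then have "al * (al * (LF * H^2) * R^2) \<le> al * (mu * R^2)" using alp by (intro mult_left_mono) auto
    then show ?thesis by (simp add: algebra_simps power2_eq_square)
  qed
  finally have "F xp \<le> F x + al * (Fs - F x)" using up by linarith
  then have "F xp - Fs \<le> (1 - al) * (F x - Fs)" by (simp add: algebra_simps)
  then show ?thesis by (simp add: F_def Fs_def al_def mu_def L_def H_def N_def)
qed



theorem theorem5:
  fixes v :: "real^'m^'n" and B :: "real^'n" and x :: "nat \<Rightarrow> real^'m^'n"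
  assumes "nondegenerate v"
    and "\<forall>i. B $ i > 0"
    and "x 0 \<in> simplexes"
    and "\<forall>t. x (Suc t) = closest_point simplexes
           (x t - (1 / (Lc v B * (onorm (linA v))^2)) *\<^sub>R grad (Fobj v B) (x t))"
  shows "Fobj v B (x t) - Inf (Fobj v B ` simplexes)
     \<le> (1 - muc v B / max (muc v B) (Lc v B * (hoffman simplexes (linA v))^2 * (onorm (linA v))^2)) ^ t
        * (Fobj v B (x 0) - Inf (Fobj v B ` simplexes))"
proof -
  let ?rho = "1 - muc v B / max (muc v B) (Lc v B * (hoffman simplexes (linA v))^2 * (onorm (linA v))^2)"
  obtain xbar where xbar: "xbar \<in> simplexes" "\<forall>y\<in>simplexes. Fobj v B xbar \<le> Fobj v B y"
    using continuous_attains_inf[OF simplexes_compact simplexes_ne Fobj_cont[OF assms(1,2)]] by blast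
  have inf: "Inf (Fobj v B ` simplexes) = Fobj v B xbar"
    using xbar by (intro cInf_eq_minimum) auto
  have rho: "?rho \<ge> 0" using muc_pos[OF assms(1,2)] by (simp add: divide_le_eq)
  have inX: "x t \<in> simplexes" for t
  proof (induction t)
    case 0 then show ?case using assms(3) .
  next
    case (Suc t) then show ?case using assms(4) closest_point_in_set[OF simplexes_closed simplexes_ne] by simp
  qed
  have "Fobj v B (x t) - Fobj v B xbar \<le> ?rho ^ t * (Fobj v B (x 0) - Fobj v B xbar)"
  proof (induction t)
    case 0 then show ?case by simp
  next
    case (Suc t)
    have "Fobj v B (x (Suc t)) - Fobj v B xbar \<le> ?rho * (Fobj v B (x t) - Fobj v B xbar)"
      by (rule one_step[OF assms(1,2) inX xbar]) (use assms(4) in simp)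
    also have "\<dots> \<le> ?rho * (?rho ^ t * (Fobj v B (x 0) - Fobj v B xbar))"
      using Suc rho by (intro mult_left_mono) auto
    finally show ?case by simp
  qed
  then show ?thesis unfolding inf .
qed


end
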